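(* Suppose the central subspace of $Y$ given $X$ exists, with dimension $d^*_{\rm CS}$ and basis matrix $B\in\mathbb{R}^{p\times d^*_{\rm CS}}$, and take $R^*=B^\top X$. Under the negative log-likelihood loss $\ell(y,g(\cdot\mid r))=-\log g(y\mid r)$ over the class $\mathcal{G}$ of conditional densities, $d^*(\mathcal{L})=d^*_{\rm CS}$.
   Context: $X\in\mathbb{R}^p$, $Y\in\mathcal{Y}\subseteq\mathbb{R}$ with conditional densities of $Y$ given any function of $X$ existing, and all expected negative log-likelihoods below finite. A subspace $\mathcal{S}$ is a dimension-reduction subspace if $Y\perp\!\!\!\perp X\mid P_{\mathcal{S}}X$; the central subspace is the intersection of all such subspaces, assumed itself to be one; $d^*_{\rm CS}$ is its dimension. $R^*=B^\top X$ is zero-padded to $R\in\mathbb{R}^{d_{\max}}$. $\mathcal{G}=\{g:\mathbb{R}^{d_{\max}}\to L^1(\mathcal{Y})\ :\ g(\cdot\mid r)\ge0,\ \int_{\mathcal{Y}}g(y\mid r)\,dy=1\}$ (measurable in $r$); $\mathcal{G}_d=\{g\in\mathcal{G}:g(\cdot\mid r)=g(\cdot\mid r')\text{ whenever } r_{[d]}=r'_{[d]}\}$; $\mathcal{L}_d=\min_{g\in\mathcal{G}_d}\mathbb{E}\{-\log g(Y\mid R)\}$; $d^*(\mathcal{L})=\min\{0\le d\le d_{\max}:\mathcal{L}_d=\mathcal{L}_{d_{\max}}\}$. *)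

theory Defs
  imports "HOL-Probability.Probability"
begin

definition gen_alg :: "'a measure \<Rightarrow> ('a \<Rightarrow> 'd::topological_space) \<Rightarrow> 'a measure" where
  "gen_alg M Z = vimage_algebra (space M) Z borel"

definition cond_indep ::
  "'a measure \<Rightarrow> ('a \<Rightarrow> 'b::topological_space) \<Rightarrow> ('a \<Rightarrow> 'c::topological_space)
     \<Rightarrow> ('a \<Rightarrow> 'd::topological_space) \<Rightarrow> bool" where
  "cond_indep M Y X Z \<longleftrightarrow>
     (\<forall>A \<in> sets borel. \<forall>B \<in> sets borel.
        AE \<omega> in M.
          real_cond_exp M (gen_alg M Z) (\<lambda>\<omega>. indicator A (Y \<omega>) * indicator B (X \<omega>)) \<omega>
          = real_cond_exp M (gen_alg M Z) (\<lambda>\<omega>. indicator A (Y \<omega>)) \<omega>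
            * real_cond_exp M (gen_alg M Z) (\<lambda>\<omega>. indicator B (X \<omega>)) \<omega>)"

definition oproj :: "(real^'p) set \<Rightarrow> real^'p \<Rightarrow> real^'p" where
  "oproj S x = (THE y. y \<in> S \<and> (\<forall>s \<in> S. inner (x - y) s = 0))"

definition dim_red_subspace :: "'a measure \<Rightarrow> ('a \<Rightarrow> real^'p) \<Rightarrow> ('a \<Rightarrow> real) \<Rightarrow> (real^'p) set \<Rightarrow> bool" where
  "dim_red_subspace M X Y S \<longleftrightarrow> subspace S \<and> cond_indep M Y X (\<lambda>\<omega>. oproj S (X \<omega>))"

definition central_subspace :: "'a measure \<Rightarrow> ('a \<Rightarrow> real^'p) \<Rightarrow> ('a \<Rightarrow> real) \<Rightarrow> (real^'p) set" where
  "central_subspace M X Y = \<Inter> {S. dim_red_subspace M X Y S}"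

text \<open>The class G of conditional densities on Yset, indexed by r in R^N
  (vectors of R^{d_max} are represented as functions nat => real, zero beyond d_max).\<close>
definition dens_class :: "real set \<Rightarrow> ((nat \<Rightarrow> real) \<Rightarrow> real \<Rightarrow> real) set" where
  "dens_class Yset = {g. (\<lambda>(r, y). g r y) \<in> borel_measurable borel
       \<and> (\<forall>r y. 0 \<le> g r y)
       \<and> (\<forall>r. (\<integral>\<^sup>+ y. ennreal (g r y) * indicator Yset y \<partial>lborel) = 1)}"

definition dens_class_d :: "real set \<Rightarrow> nat \<Rightarrow> ((nat \<Rightarrow> real) \<Rightarrow> real \<Rightarrow> real) set" where
  "dens_class_d Yset d = {g \<in> dens_class Yset. \<forall>r r'. (\<forall>i<d. r i = r' i) \<longrightarrow> g r = g r'}"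

definition exp_nll :: "'a measure \<Rightarrow> ('a \<Rightarrow> real) \<Rightarrow> ('a \<Rightarrow> nat \<Rightarrow> real)
     \<Rightarrow> ((nat \<Rightarrow> real) \<Rightarrow> real \<Rightarrow> real) \<Rightarrow> ereal" where
  "exp_nll M Y R g =
     (if (AE \<omega> in M. 0 < g (R \<omega>) (Y \<omega>)) \<and> integrable M (\<lambda>\<omega>. - ln (g (R \<omega>) (Y \<omega>)))
      then ereal (\<integral>\<omega>. - ln (g (R \<omega>) (Y \<omega>)) \<partial>M) else \<infinity>)"

definition loss_d :: "'a measure \<Rightarrow> real set \<Rightarrow> ('a \<Rightarrow> real) \<Rightarrow> ('a \<Rightarrow> nat \<Rightarrow> real) \<Rightarrow> nat \<Rightarrow> ereal" where
  "loss_d M Yset Y R d = (INF g \<in> dens_class_d Yset d. exp_nll M Y R g)"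

definition d_star :: "'a measure \<Rightarrow> real set \<Rightarrow> ('a \<Rightarrow> real) \<Rightarrow> ('a \<Rightarrow> nat \<Rightarrow> real) \<Rightarrow> nat \<Rightarrow> nat" where
  "d_star M Yset Y R dmax = (LEAST d. d \<le> dmax \<and> loss_d M Yset Y R d = loss_d M Yset Y R dmax)"

definition is_cond_density :: "'a measure \<Rightarrow> real set \<Rightarrow> ('a \<Rightarrow> real) \<Rightarrow> ('a \<Rightarrow> nat \<Rightarrow> real)
     \<Rightarrow> ((nat \<Rightarrow> real) \<Rightarrow> real \<Rightarrow> real) \<Rightarrow> bool" where
  "is_cond_density M Yset Y Z g \<longleftrightarrow> g \<in> dens_class Yset \<and>
     (\<forall>A \<in> sets borel. \<forall>C \<in> sets borel.
        emeasure M {\<omega> \<in> space M. Y \<omega> \<in> A \<and> Z \<omega> \<in> C}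
        = (\<integral>\<^sup>+ \<omega>. indicator C (Z \<omega>) *
              (\<integral>\<^sup>+ y. ennreal (g (Z \<omega>) y) * indicator (A \<inter> Yset) y \<partial>lborel) \<partial>M))"

end

theory Submission
  imports Defs
begin


lemma oproj_prop:
  fixes S :: "(real^'p) set"
  assumes "subspace S"
  shows "oproj S x \<in> S \<and> (\<forall>s\<in>S. inner (x - oproj S x) s = 0)"
proof -
  obtain y z where y: "y \<in> span S" and z: "\<And>w. w \<in> span S \<Longrightarrow> orthogonal z w" and xyz: "x = y + z"
    by (rule orthogonal_subspace_decomp_exists[of S x]) blast
  have sS: "span S = S" using assms by (simp add: span_eq_iff)
  have P: "y \<in> S \<and> (\<forall>s\<in>S. inner (x - y) s = 0)"
    using y z xyz sS by (auto simp: orthogonal_def)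
  have U: "y' = y" if "y' \<in> S \<and> (\<forall>s\<in>S. inner (x - y') s = 0)" for y'
  proof -
    have d: "y - y' \<in> S" using that P assms by (simp add: subspace_diff)
    have "inner (y - y') (y - y') = inner (x - y') (y - y') - inner (x - y) (y - y')"
      by (simp add: inner_diff_left)
    also have "\<dots> = 0" using that P d by simp
    finally show ?thesis by simp
  qed
  show ?thesis unfolding oproj_def using P U by (rule theI2) (use P U in auto)
qed

lemma oproj_eqI:
  fixes S :: "(real^'p) set"
  assumes "subspace S" "y \<in> S" "\<forall>s\<in>S. inner (x - y) s = 0"
  shows "oproj S x = y"
proof -
  have P: "oproj S x \<in> S" "\<forall>s\<in>S. inner (x - oproj S x) s = 0" using oproj_prop[OF assms(1)] by auto
  have d: "y - oproj S x \<in> S" using assms P by (simp add: subspace_diff)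
  have "inner (y - oproj S x) (y - oproj S x) = inner (x - oproj S x) (y - oproj S x) - inner (x - y) (y - oproj S x)"
    by (simp add: inner_diff_left)
  also have "\<dots> = 0" using assms P d by simp
  finally show ?thesis by simp
qed

lemma oproj_linear:
  fixes S :: "(real^'p) set"
  assumes "subspace S"
  shows "linear (oproj S)"
proof (rule linearI)
  fix x y :: "real^'p"
  show "oproj S (x + y) = oproj S x + oproj S y"
    using oproj_prop[OF assms, of x] oproj_prop[OF assms, of y] assms
    by (intro oproj_eqI) (auto simp: subspace_add inner_diff_left inner_add_left algebra_simps)
next
  fix c :: real and x :: "real^'p"
  show "oproj S (c *\<^sub>R x) = c *\<^sub>R oproj S x"
    using oproj_prop[OF assms, of x] assms
    by (intro oproj_eqI) (auto simp: subspace_scale inner_diff_left algebra_simps)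
qed

lemma oproj_cont: "subspace (S :: (real^'p) set) \<Longrightarrow> continuous_on UNIV (oproj S)"
  by (intro linear_continuous_on) (simp add: oproj_linear flip: linear_conv_bounded_linear)

lemma oproj_inner: "subspace (S :: (real^'p) set) \<Longrightarrow> b \<in> S \<Longrightarrow> inner b (oproj S x) = inner b x"
proof -
  assume a: "subspace S" "b \<in> S"
  then have "inner (x - oproj S x) b = 0" using oproj_prop[of S x] by auto
  then have "inner b (x - oproj S x) = 0" by (simp add: inner_commute)
  then show ?thesis by (simp add: inner_diff_right)
qed

definition hT :: "(nat \<Rightarrow> real^'p) \<Rightarrow> nat \<Rightarrow> real^'p \<Rightarrow> nat \<Rightarrow> real" where
  "hT B d x = (\<lambda>i. if i < d then inner (B i) x else 0)"

lemma hT_cont: "continuous_on UNIV (hT B d)"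
  unfolding hT_def
proof (intro continuous_on_coordinatewise_then_product)
  fix i show "continuous_on UNIV (\<lambda>x. if i < d then inner (B i) x else 0)"
    by (cases "i < d") (auto intro!: continuous_intros)
qed

lemma dual_exists:
  fixes B :: "nat \<Rightarrow> real^'p"
  assumes inj: "inj_on B {..<n}" and ind: "independent (B ` {..<n})" and j: "j < n"
  shows "\<exists>D \<in> span (B ` {..<n}). \<forall>i<n. inner (B i) D = (if i = j then 1 else 0)"
proof -
  define V where "V = span (B ` ({..<n} - {j}))"
  have sV: "subspace V" unfolding V_def by simp
  define u where "u = B j - oproj V (B j)"
  have uV: "\<forall>s\<in>V. inner u s = 0" using oproj_prop[OF sV, of "B j"] unfolding u_def by auto
  have pV: "oproj V (B j) \<in> V" using oproj_prop[OF sV] by auto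
  have VS: "V \<subseteq> span (B ` {..<n})" unfolding V_def by (intro span_mono) auto
  have uS: "u \<in> span (B ` {..<n})" unfolding u_def using pV VS j
    by (intro span_diff) (auto intro: span_base)
  have img: "B ` ({..<n} - {j}) = B ` {..<n} - {B j}" using inj j by (auto simp: inj_on_def)
  have u0: "u \<noteq> 0"
  proof
    assume "u = 0"
    then have "B j \<in> V" using pV unfolding u_def by simp
    then have "B j \<in> span (B ` {..<n} - {B j})" unfolding V_def img .
    then have "dependent (B ` {..<n})" unfolding dependent_def using j by blast
    with ind show False by simp
  qed
  have Bju: "inner (B j) u = inner u u"
  proof -
    have "inner (B j) u = inner (u + oproj V (B j)) u" unfolding u_def by simp
    also have "\<dots> = inner u u + inner (oproj V (B j)) u" by (simp add: inner_add_left)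
    also have "inner (oproj V (B j)) u = 0" using uV pV by (metis inner_commute)
    finally show ?thesis by simp
  qed
  have uu: "inner u u > 0" using u0 by simp
  define D where "D = (1 / inner u u) *\<^sub>R u"
  have "inner (B i) D = (if i = j then 1 else 0)" if "i < n" for i
  proof (cases "i = j")
    case True then show ?thesis using Bju uu by (simp add: D_def)
  next
    case False
    then have "B i \<in> V" unfolding V_def using that by (intro span_base) auto
    then have "inner (B i) u = 0" using uV by (metis inner_commute)
    then show ?thesis using False by (simp add: D_def)
  qed
  moreover have "D \<in> span (B ` {..<n})" unfolding D_def using uS by (simp add: span_scale)
  ultimately show ?thesis by blast
qed

lemma K_exists:
  fixes B :: "nat \<Rightarrow> real^'p"
  assumes inj: "inj_on B {..<n}" and ind: "independent (B ` {..<n})"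
  shows "\<exists>K. continuous_on UNIV K \<and> (\<forall>x. K (hT B n x) = oproj (span (B ` {..<n})) x)"
proof -
  let ?S = "span (B ` {..<n})"
  have "\<forall>j. \<exists>D. j < n \<longrightarrow> D \<in> ?S \<and> (\<forall>i<n. inner (B i) D = (if i = j then 1 else 0))"
    using dual_exists[OF inj ind] by blast
  then obtain D where D: "\<And>j. j < n \<Longrightarrow> D j \<in> ?S \<and> (\<forall>i<n. inner (B i) (D j) = (if i = j then 1 else 0))"
    by metis
  define K where "K = (\<lambda>r::nat \<Rightarrow> real. \<Sum>j<n. r j *\<^sub>R D j)"
  have cK: "continuous_on UNIV K" unfolding K_def
    by (intro continuous_intros continuous_on_product_then_coordinatewise continuous_on_id)
  have "K (hT B n x) = oproj ?S x" for x
  proof -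
    have sS: "subspace ?S" by simp
    define w where "w = oproj ?S x - K (hT B n x)"
    have KS: "K (hT B n x) \<in> ?S" unfolding K_def using D by (intro span_sum span_scale) auto
    have wS: "w \<in> ?S" unfolding w_def using KS oproj_prop[OF sS, of x] by (intro span_diff) auto
    have Bw: "inner (B i) w = 0" if i: "i < n" for i
    proof -
      have "inner (B i) (K (hT B n x)) = (\<Sum>j<n. hT B n x j * inner (B i) (D j))"
        unfolding K_def by (simp add: inner_sum_right)
      also have "\<dots> = (\<Sum>j<n. if j = i then inner (B i) x else 0)"
        using D i by (intro sum.cong) (auto simp: hT_def)
      also have "\<dots> = inner (B i) x" using i by simp
      finally show ?thesis unfolding w_def using oproj_inner[OF sS, of "B i" x] i
        by (simp add: inner_diff_right span_base)
    qed
    have "orthogonal w w"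
      by (rule orthogonal_to_span[OF wS]) (auto simp: orthogonal_def, metis inner_commute Bw)
    then have "w = 0" by (simp add: orthogonal_def)
    then show ?thesis unfolding w_def by simp
  qed
  with cK show ?thesis by blast
qed



lemma sec_meas:
  assumes "(\<lambda>(r, y). p r y) \<in> borel_measurable (borel :: ((nat \<Rightarrow> real) \<times> real) measure)"
  shows "p r \<in> borel_measurable borel"
proof -
  have "(\<lambda>y::real. (r, y)) \<in> borel_measurable borel" by measurable
  from measurable_compose[OF this assms] show ?thesis by simp
qed

lemma cd_E1:
  fixes Z :: "'a \<Rightarrow> (nat \<Rightarrow> real)" and Y :: "'a \<Rightarrow> real"
  assumes M: "prob_space M" and Zm[measurable]: "Z \<in> borel_measurable M" and Ym[measurable]: "Y \<in> borel_measurable M"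
    and Ys[measurable]: "Yset \<in> sets borel"
    and cd: "is_cond_density M Yset Y Z p"
    and f[measurable]: "f \<in> borel_measurable (borel :: ((nat \<Rightarrow> real) \<times> real) measure)"
  shows "(\<integral>\<^sup>+\<omega>. f (Z \<omega>, Y \<omega>) \<partial>M) =
         (\<integral>\<^sup>+\<omega>. \<integral>\<^sup>+y. f (Z \<omega>, y) * (ennreal (p (Z \<omega>) y) * indicator Yset y) \<partial>lborel \<partial>M)"
proof -
  interpret prob_space M by fact
  have pm[measurable]: "(\<lambda>(r, y). p r y) \<in> borel_measurable (borel :: ((nat \<Rightarrow> real) \<times> real) measure)"
    using cd by (simp add: is_cond_density_def dens_class_def)
  have pcd: "\<forall>A \<in> sets borel. \<forall>C \<in> sets borel.
        emeasure M {\<omega> \<in> space M. Y \<omega> \<in> A \<and> Z \<omega> \<in> C}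
        = (\<integral>\<^sup>+ \<omega>. indicator C (Z \<omega>) *
              (\<integral>\<^sup>+ y. ennreal (p (Z \<omega>) y) * indicator (A \<inter> Yset) y \<partial>lborel) \<partial>M)"
    using cd by (simp add: is_cond_density_def)
  let ?P = "\<lambda>\<omega>. (Z \<omega>, Y \<omega>)"
  let ?Q = "\<lambda>(\<omega>, y). (Z \<omega>, y)"
  let ?d = "\<lambda>(r, y). ennreal (p r y) * indicator Yset y"
  have Pm[measurable]: "?P \<in> measurable M (borel :: ((nat \<Rightarrow> real) \<times> real) measure)" by measurable
  have Qm[measurable]: "?Q \<in> measurable (M \<Otimes>\<^sub>M lborel) (borel :: ((nat \<Rightarrow> real) \<times> real) measure)"
    by measurable
  have pm'[measurable]: "(\<lambda>x. p (fst x) (snd x)) \<in> borel_measurable (borel :: ((nat \<Rightarrow> real) \<times> real) measure)"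
    using pm by (simp add: split_beta')
  have sm[measurable]: "snd \<in> borel_measurable (borel :: ((nat \<Rightarrow> real) \<times> real) measure)"
    by (intro borel_measurable_continuous_onI continuous_on_snd continuous_on_id)
  have dm[measurable]: "?d \<in> borel_measurable (borel :: ((nat \<Rightarrow> real) \<times> real) measure)"
    by measurable
  define N1 where "N1 = distr M (borel :: ((nat \<Rightarrow> real) \<times> real) measure) ?P"
  define N2 where "N2 = density (distr (M \<Otimes>\<^sub>M lborel) (borel :: ((nat \<Rightarrow> real) \<times> real) measure) ?Q) ?d"
  have N2int: "integral\<^sup>N N2 g = (\<integral>\<^sup>+\<omega>. \<integral>\<^sup>+y. g (Z \<omega>, y) * (ennreal (p (Z \<omega>) y) * indicator Yset y) \<partial>lborel \<partial>M)"
    if [measurable]: "g \<in> borel_measurable (borel :: ((nat \<Rightarrow> real) \<times> real) measure)" for g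
  proof -
    have "integral\<^sup>N N2 g = (\<integral>\<^sup>+x. ?d x * g x \<partial>distr (M \<Otimes>\<^sub>M lborel) borel ?Q)"
      unfolding N2_def by (simp add: nn_integral_density)
    also have "\<dots> = (\<integral>\<^sup>+x. ?d (?Q x) * g (?Q x) \<partial>(M \<Otimes>\<^sub>M lborel))"
      by (simp add: nn_integral_distr)
    also have "\<dots> = (\<integral>\<^sup>+\<omega>. \<integral>\<^sup>+y. ?d (?Q (\<omega>, y)) * g (?Q (\<omega>, y)) \<partial>lborel \<partial>M)"
      by (rule lborel.nn_integral_fst[symmetric]) measurable
    also have "\<dots> = (\<integral>\<^sup>+\<omega>. \<integral>\<^sup>+y. g (Z \<omega>, y) * (ennreal (p (Z \<omega>) y) * indicator Yset y) \<partial>lborel \<partial>M)"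
      by (simp add: mult.commute)
    finally show ?thesis .
  qed
  have "N1 = N2"
  proof (rule measure_eqI_generator_eq[where \<Omega>=UNIV and E="{a \<times> b | a b. a \<in> sets borel \<and> b \<in> sets borel}" and A="\<lambda>_. UNIV"])
    show "Int_stable {a \<times> b | a b. a \<in> sets (borel :: (nat \<Rightarrow> real) measure) \<and> b \<in> sets (borel :: real measure)}"
      by (rule Int_stable_pair_measure_generator)
    show "{a \<times> b | a b. a \<in> sets (borel :: (nat \<Rightarrow> real) measure) \<and> b \<in> sets (borel :: real measure)} \<subseteq> Pow UNIV" by simp
    have sb: "sets (borel :: ((nat \<Rightarrow> real) \<times> real) measure) = sigma_sets UNIV {a \<times> b | a b. a \<in> sets (borel :: (nat \<Rightarrow> real) measure) \<and> b \<in> sets (borel :: real measure)}"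
      by (subst borel_prod[symmetric]) (simp add: sets_pair_measure)
    show "sets N1 = sigma_sets UNIV {a \<times> b | a b. a \<in> sets (borel :: (nat \<Rightarrow> real) measure) \<and> b \<in> sets (borel :: real measure)}"
      unfolding N1_def using sb by simp
    show "sets N2 = sigma_sets UNIV {a \<times> b | a b. a \<in> sets (borel :: (nat \<Rightarrow> real) measure) \<and> b \<in> sets (borel :: real measure)}"
      unfolding N2_def using sb by simp
    show "range (\<lambda>_. UNIV) \<subseteq> {a \<times> b | a b. a \<in> sets (borel :: (nat \<Rightarrow> real) measure) \<and> b \<in> sets (borel :: real measure)}"
      by (auto intro!: exI[of _ UNIV])
    show "(\<Union>i. UNIV) = UNIV" by simp
    show "emeasure N1 UNIV \<noteq> \<infinity>" for i :: nat
      unfolding N1_def by (simp add: emeasure_distr emeasure_space_1)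
  next
    fix X assume "X \<in> {a \<times> b | a b. a \<in> sets (borel :: (nat \<Rightarrow> real) measure) \<and> b \<in> sets (borel :: real measure)}"
    then obtain a b where X: "X = a \<times> b" and [measurable]: "a \<in> sets borel" "b \<in> sets borel" by auto
    have Xs[measurable]: "X \<in> sets (borel :: ((nat \<Rightarrow> real) \<times> real) measure)"
      unfolding X by (subst borel_prod[symmetric]) auto
    have "emeasure N1 X = emeasure M (?P -` X \<inter> space M)"
      unfolding N1_def by (rule emeasure_distr) (auto simp: Xs)
    also have "?P -` X \<inter> space M = {\<omega> \<in> space M. Y \<omega> \<in> b \<and> Z \<omega> \<in> a}" unfolding X by auto
    also have "emeasure M \<dots> = (\<integral>\<^sup>+ \<omega>. indicator a (Z \<omega>) *
              (\<integral>\<^sup>+ y. ennreal (p (Z \<omega>) y) * indicator (b \<inter> Yset) y \<partial>lborel) \<partial>M)"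
      using pcd by simp
    also have "\<dots> = (\<integral>\<^sup>+\<omega>. \<integral>\<^sup>+y. indicator X (Z \<omega>, y) * (ennreal (p (Z \<omega>) y) * indicator Yset y) \<partial>lborel \<partial>M)"
    proof (intro nn_integral_cong)
      fix \<omega> assume "\<omega> \<in> space M"
      have [measurable]: "p (Z \<omega>) \<in> borel_measurable borel" by (rule sec_meas[OF pm])
      have "indicator a (Z \<omega>) * (\<integral>\<^sup>+ y. ennreal (p (Z \<omega>) y) * indicator (b \<inter> Yset) y \<partial>lborel)
        = (\<integral>\<^sup>+ y. indicator a (Z \<omega>) * (ennreal (p (Z \<omega>) y) * indicator (b \<inter> Yset) y) \<partial>lborel)"
        by (rule nn_integral_cmult[symmetric]) measurable
      also have "\<dots> = (\<integral>\<^sup>+y. indicator X (Z \<omega>, y) * (ennreal (p (Z \<omega>) y) * indicator Yset y) \<partial>lborel)"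
        unfolding X by (intro nn_integral_cong) (auto simp: indicator_def)
      finally show "indicator a (Z \<omega>) * (\<integral>\<^sup>+ y. ennreal (p (Z \<omega>) y) * indicator (b \<inter> Yset) y \<partial>lborel)
        = (\<integral>\<^sup>+y. indicator X (Z \<omega>, y) * (ennreal (p (Z \<omega>) y) * indicator Yset y) \<partial>lborel)" .
    qed
    also have "\<dots> = integral\<^sup>N N2 (indicator X)"
      by (rule N2int[symmetric]) (simp add: Xs)
    also have "\<dots> = emeasure N2 X"
      by (rule nn_integral_indicator) (simp add: Xs N2_def)
    finally show "emeasure N1 X = emeasure N2 X" .
  qed
  have "(\<integral>\<^sup>+\<omega>. f (Z \<omega>, Y \<omega>) \<partial>M) = integral\<^sup>N N1 f"
    unfolding N1_def by (simp add: nn_integral_distr)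
  also have "\<dots> = integral\<^sup>N N2 f" using \<open>N1 = N2\<close> by simp
  also have "\<dots> = (\<integral>\<^sup>+\<omega>. \<integral>\<^sup>+y. f (Z \<omega>, y) * (ennreal (p (Z \<omega>) y) * indicator Yset y) \<partial>lborel \<partial>M)" by (rule N2int) fact
  finally show ?thesis .
qed



lemma dens_meas:
  assumes "g \<in> dens_class Yset"
  shows "(\<lambda>(r, y). g r y) \<in> borel_measurable (borel :: ((nat \<Rightarrow> real) \<times> real) measure)"
  using assms by (simp add: dens_class_def)

lemma comp_meas:
  assumes "g \<in> dens_class Yset" and [measurable]: "Z \<in> borel_measurable M" "Y \<in> borel_measurable M"
  shows "(\<lambda>\<omega>. g (Z \<omega>) (Y \<omega>)) \<in> borel_measurable M"
proof -
  have "(\<lambda>\<omega>. (Z \<omega>, Y \<omega>)) \<in> measurable M (borel :: ((nat \<Rightarrow> real) \<times> real) measure)" by measurable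
  from measurable_compose[OF this dens_meas[OF assms(1)]] show ?thesis by simp
qed

lemma cd_pos:
  fixes Z :: "'a \<Rightarrow> (nat \<Rightarrow> real)" and Y :: "'a \<Rightarrow> real"
  assumes M: "prob_space M" and Zm[measurable]: "Z \<in> borel_measurable M" and Ym[measurable]: "Y \<in> borel_measurable M"
    and Ys[measurable]: "Yset \<in> sets borel"
    and cd: "is_cond_density M Yset Y Z p"
  shows "AE \<omega> in M. 0 < p (Z \<omega>) (Y \<omega>)"
proof -
  have pd: "p \<in> dens_class Yset" using cd by (simp add: is_cond_density_def)
  have pm[measurable]: "(\<lambda>x. p (fst x) (snd x)) \<in> borel_measurable (borel :: ((nat \<Rightarrow> real) \<times> real) measure)"
    using dens_meas[OF pd] by (simp add: split_beta')
  let ?f = "\<lambda>x::(nat \<Rightarrow> real) \<times> real. (if p (fst x) (snd x) \<le> 0 then 1 else 0 :: ennreal)"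
  have fm[measurable]: "?f \<in> borel_measurable borel" by measurable
  have "(\<integral>\<^sup>+\<omega>. ?f (Z \<omega>, Y \<omega>) \<partial>M) =
         (\<integral>\<^sup>+\<omega>. \<integral>\<^sup>+y. ?f (Z \<omega>, y) * (ennreal (p (Z \<omega>) y) * indicator Yset y) \<partial>lborel \<partial>M)"
    by (rule cd_E1[OF M Zm Ym Ys cd fm])
  also have "\<dots> = (\<integral>\<^sup>+\<omega>. 0 \<partial>M)"
  proof (intro nn_integral_cong)
    fix \<omega>
    have z: "\<And>y. ?f (Z \<omega>, y) * (ennreal (p (Z \<omega>) y) * indicator Yset y) = 0"
      by (auto simp: ennreal_eq_0_iff)
    show "(\<integral>\<^sup>+y. ?f (Z \<omega>, y) * (ennreal (p (Z \<omega>) y) * indicator Yset y) \<partial>lborel) = 0" unfolding z by simp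
  qed
  finally have "(\<integral>\<^sup>+\<omega>. ?f (Z \<omega>, Y \<omega>) \<partial>M) = 0" by simp
  then have "AE \<omega> in M. ?f (Z \<omega>, Y \<omega>) = 0" by (subst (asm) nn_integral_0_iff_AE) measurable
  then show ?thesis by eventually_elim (auto split: if_splits)
qed

lemma cd_ratio:
  fixes Z :: "'a \<Rightarrow> (nat \<Rightarrow> real)" and Y :: "'a \<Rightarrow> real"
  assumes M: "prob_space M" and Zm[measurable]: "Z \<in> borel_measurable M" and Ym[measurable]: "Y \<in> borel_measurable M"
    and Ys[measurable]: "Yset \<in> sets borel"
    and cd: "is_cond_density M Yset Y Z p" and g: "g \<in> dens_class Yset"
  shows "(\<integral>\<^sup>+\<omega>. ennreal (g (Z \<omega>) (Y \<omega>) / p (Z \<omega>) (Y \<omega>)) \<partial>M) \<le> 1"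
proof -
  interpret prob_space M by fact
  have pd: "p \<in> dens_class Yset" using cd by (simp add: is_cond_density_def)
  have pm[measurable]: "(\<lambda>x. p (fst x) (snd x)) \<in> borel_measurable (borel :: ((nat \<Rightarrow> real) \<times> real) measure)"
    using dens_meas[OF pd] by (simp add: split_beta')
  have gm[measurable]: "(\<lambda>x. g (fst x) (snd x)) \<in> borel_measurable (borel :: ((nat \<Rightarrow> real) \<times> real) measure)"
    using dens_meas[OF g] by (simp add: split_beta')
  let ?f = "\<lambda>x::(nat \<Rightarrow> real) \<times> real. ennreal (g (fst x) (snd x) / p (fst x) (snd x))"
  have fm[measurable]: "?f \<in> borel_measurable borel" by measurable
  have g1: "\<And>r. (\<integral>\<^sup>+ y. ennreal (g r y) * indicator Yset y \<partial>lborel) = 1" using g by (simp add: dens_class_def)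
  have p0: "\<And>r y. 0 \<le> p r y" using pd by (simp add: dens_class_def)
  have g0: "\<And>r y. 0 \<le> g r y" using g by (simp add: dens_class_def)
  have "(\<integral>\<^sup>+\<omega>. ?f (Z \<omega>, Y \<omega>) \<partial>M) =
         (\<integral>\<^sup>+\<omega>. \<integral>\<^sup>+y. ?f (Z \<omega>, y) * (ennreal (p (Z \<omega>) y) * indicator Yset y) \<partial>lborel \<partial>M)"
    by (rule cd_E1[OF M Zm Ym Ys cd fm])
  also have "\<dots> \<le> (\<integral>\<^sup>+\<omega>. \<integral>\<^sup>+y. ennreal (g (Z \<omega>) y) * indicator Yset y \<partial>lborel \<partial>M)"
  proof (intro nn_integral_mono)
    fix \<omega> y
    have "?f (Z \<omega>, y) * ennreal (p (Z \<omega>) y) = ennreal (g (Z \<omega>) y / p (Z \<omega>) y * p (Z \<omega>) y)"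
      by (subst ennreal_mult[symmetric]) (use p0 g0 in auto)
    also have "\<dots> \<le> ennreal (g (Z \<omega>) y)"
      using p0[of "Z \<omega>" y] g0[of "Z \<omega>" y] by (cases "p (Z \<omega>) y = 0") (auto intro: ennreal_leI)
    finally show "?f (Z \<omega>, y) * (ennreal (p (Z \<omega>) y) * indicator Yset y) \<le> ennreal (g (Z \<omega>) y) * indicator Yset y"
      by (simp add: mult.assoc[symmetric] mult_right_mono)
  qed
  also have "\<dots> = (\<integral>\<^sup>+\<omega>. 1 \<partial>M)" using g1 by simp
  also have "\<dots> = 1" by (simp add: emeasure_space_1)
  finally show ?thesis by simp
qed

lemma gibbs:
  fixes Z :: "'a \<Rightarrow> (nat \<Rightarrow> real)" and Y :: "'a \<Rightarrow> real"
  assumes M: "prob_space M" and Zm[measurable]: "Z \<in> borel_measurable M" and Ym[measurable]: "Y \<in> borel_measurable M"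
    and Ys[measurable]: "Yset \<in> sets borel"
    and cd: "is_cond_density M Yset Y Z p" and g: "g \<in> dens_class Yset"
    and ig: "integrable M (\<lambda>\<omega>. - ln (g (Z \<omega>) (Y \<omega>)))"
    and ip: "integrable M (\<lambda>\<omega>. - ln (p (Z \<omega>) (Y \<omega>)))"
    and gpos: "AE \<omega> in M. 0 < g (Z \<omega>) (Y \<omega>)"
  shows "(\<integral>\<omega>. - ln (p (Z \<omega>) (Y \<omega>)) \<partial>M) \<le> (\<integral>\<omega>. - ln (g (Z \<omega>) (Y \<omega>)) \<partial>M)"
    and "(\<integral>\<omega>. - ln (g (Z \<omega>) (Y \<omega>)) \<partial>M) \<le> (\<integral>\<omega>. - ln (p (Z \<omega>) (Y \<omega>)) \<partial>M)
         \<Longrightarrow> AE \<omega> in M. g (Z \<omega>) (Y \<omega>) = p (Z \<omega>) (Y \<omega>)"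
proof -
  interpret prob_space M by fact
  have pd: "p \<in> dens_class Yset" using cd by (simp add: is_cond_density_def)
  have p0: "\<And>r y. 0 \<le> p r y" using pd by (simp add: dens_class_def)
  have g0: "\<And>r y. 0 \<le> g r y" using g by (simp add: dens_class_def)
  have pm[measurable]: "(\<lambda>\<omega>. p (Z \<omega>) (Y \<omega>)) \<in> borel_measurable M" by (rule comp_meas[OF pd Zm Ym])
  have gm[measurable]: "(\<lambda>\<omega>. g (Z \<omega>) (Y \<omega>)) \<in> borel_measurable M" by (rule comp_meas[OF g Zm Ym])
  define W where "W = (\<lambda>\<omega>. g (Z \<omega>) (Y \<omega>) / p (Z \<omega>) (Y \<omega>))"
  have Wm[measurable]: "W \<in> borel_measurable M" unfolding W_def by measurable
  have W0: "\<And>\<omega>. 0 \<le> W \<omega>" unfolding W_def using p0 g0 by simp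
  have Wn: "(\<integral>\<^sup>+\<omega>. ennreal (W \<omega>) \<partial>M) \<le> 1" unfolding W_def by (rule cd_ratio[OF M Zm Ym Ys cd g])
  have iW: "integrable M W"
    by (rule integrableI_nonneg) (use W0 Wn in \<open>auto simp: le_less_trans[OF Wn]\<close>)
  have intW: "(\<integral>\<omega>. W \<omega> \<partial>M) \<le> 1"
  proof -
    have "(\<integral>\<omega>. W \<omega> \<partial>M) = enn2real (\<integral>\<^sup>+\<omega>. ennreal (W \<omega>) \<partial>M)"
      by (rule integral_eq_nn_integral) (auto simp: W0)
    also have "\<dots> \<le> enn2real 1" using Wn by (intro enn2real_mono) auto
    finally show ?thesis by simp
  qed
  have ppos: "AE \<omega> in M. 0 < p (Z \<omega>) (Y \<omega>)" by (rule cd_pos[OF M Zm Ym Ys cd])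
  have lnW: "AE \<omega> in M. ln (W \<omega>) = (- ln (p (Z \<omega>) (Y \<omega>))) - (- ln (g (Z \<omega>) (Y \<omega>))) \<and> 0 < W \<omega>"
    using ppos gpos by eventually_elim (auto simp: W_def ln_div)
  have ilnW: "integrable M (\<lambda>\<omega>. ln (W \<omega>))"
  proof -
    have "integrable M (\<lambda>\<omega>. (- ln (p (Z \<omega>) (Y \<omega>))) - (- ln (g (Z \<omega>) (Y \<omega>))))" using ip ig by simp
    then show ?thesis by (rule integrable_cong_AE_imp) (use lnW in \<open>auto elim: AE_mp\<close>)
  qed
  have intlnW: "(\<integral>\<omega>. ln (W \<omega>) \<partial>M) = (\<integral>\<omega>. - ln (p (Z \<omega>) (Y \<omega>)) \<partial>M) - (\<integral>\<omega>. - ln (g (Z \<omega>) (Y \<omega>)) \<partial>M)"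
  proof -
    have "(\<integral>\<omega>. ln (W \<omega>) \<partial>M) = (\<integral>\<omega>. (- ln (p (Z \<omega>) (Y \<omega>))) - (- ln (g (Z \<omega>) (Y \<omega>))) \<partial>M)"
      by (rule integral_cong_AE) (use lnW in \<open>auto elim: AE_mp\<close>)
    also have "\<dots> = (\<integral>\<omega>. - ln (p (Z \<omega>) (Y \<omega>)) \<partial>M) - (\<integral>\<omega>. - ln (g (Z \<omega>) (Y \<omega>)) \<partial>M)"
      using ip ig by (rule Bochner_Integration.integral_diff)
    finally show ?thesis .
  qed
  define H where "H = (\<lambda>\<omega>. W \<omega> - 1 - ln (W \<omega>))"
  have iH: "integrable M H" unfolding H_def using iW ilnW by simp
  have H0: "AE \<omega> in M. 0 \<le> H \<omega>" using lnW by eventually_elim (auto simp: H_def dest: ln_le_minus_one)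
  have intH: "(\<integral>\<omega>. H \<omega> \<partial>M) = (\<integral>\<omega>. W \<omega> \<partial>M) - 1 - (\<integral>\<omega>. ln (W \<omega>) \<partial>M)"
    unfolding H_def using iW ilnW by (simp add: prob_space)
  have intH0: "0 \<le> (\<integral>\<omega>. H \<omega> \<partial>M)" using H0 by (rule integral_nonneg_AE)
  show "(\<integral>\<omega>. - ln (p (Z \<omega>) (Y \<omega>)) \<partial>M) \<le> (\<integral>\<omega>. - ln (g (Z \<omega>) (Y \<omega>)) \<partial>M)"
    using intH intH0 intW intlnW by linarith
  assume le: "(\<integral>\<omega>. - ln (g (Z \<omega>) (Y \<omega>)) \<partial>M) \<le> (\<integral>\<omega>. - ln (p (Z \<omega>) (Y \<omega>)) \<partial>M)"
  have "(\<integral>\<omega>. H \<omega> \<partial>M) = 0" using intH intH0 intW intlnW le by linarith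
  then have "AE \<omega> in M. H \<omega> = 0" using integral_nonneg_eq_0_iff_AE[OF iH H0] by simp
  then show "AE \<omega> in M. g (Z \<omega>) (Y \<omega>) = p (Z \<omega>) (Y \<omega>)"
    using lnW ppos
  proof eventually_elim
    case (elim \<omega>)
    then have "W \<omega> = 1" using ln_eq_minus_one[of "W \<omega>"] by (auto simp: H_def)
    then show ?case using elim by (auto simp: W_def)
  qed
qed



lemma gen_alg_sfs:
  assumes "prob_space M" and "V \<in> borel_measurable M"
  shows "sigma_finite_subalgebra M (gen_alg M V)"
proof (rule finite_measure_subalgebra_is_sigma_finite)
  interpret prob_space M by fact
  show "finite_measure_subalgebra M (gen_alg M V)"
  proof unfold_locales
    show "subalgebra M (gen_alg M V)" unfolding subalgebra_def gen_alg_def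
      using sets_image_in_sets[OF refl assms(2)] by simp
  qed
qed

lemma gen_alg_sets:
  "sets (gen_alg M V) = {V -` A \<inter> space M | A. A \<in> sets borel}"
  unfolding gen_alg_def by (rule sets_vimage_algebra2) simp

lemma gen_alg_meas:
  assumes "f \<in> borel_measurable borel"
  shows "(\<lambda>\<omega>. f (V \<omega>)) \<in> borel_measurable (gen_alg M V)"
proof -
  have "V \<in> measurable (gen_alg M V) borel" unfolding gen_alg_def
    by (rule measurable_vimage_algebra1) simp
  from measurable_compose[OF this assms] show ?thesis .
qed

lemma ind_meas[measurable]:
  assumes "A \<in> sets borel" "Y \<in> borel_measurable M"
  shows "(\<lambda>\<omega>. indicator A (Y \<omega>) :: real) \<in> borel_measurable M"
  using assms by measurable

lemma CI_to_reg:
  fixes X :: "'a \<Rightarrow> 'c::topological_space" and Y :: "'a \<Rightarrow> 'b::topological_space" and V :: "'a \<Rightarrow> 'd::topological_space"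
  assumes M: "prob_space M" and [measurable]: "X \<in> borel_measurable M" "Y \<in> borel_measurable M" "V \<in> borel_measurable M"
    and ci: "cond_indep M Y X V" and A[measurable]: "A \<in> sets borel" and C[measurable]: "C \<in> sets borel"
  shows "(\<integral>\<omega>. indicator A (Y \<omega>) * indicator C (X \<omega>) \<partial>M)
       = (\<integral>\<omega>. real_cond_exp M (gen_alg M V) (\<lambda>\<omega>. indicator A (Y \<omega>)) \<omega> * indicator C (X \<omega>) \<partial>M)"
proof -
  interpret prob_space M by fact
  interpret F: sigma_finite_subalgebra M "gen_alg M V" by (rule gen_alg_sfs[OF M]) simp
  let ?F = "gen_alg M V"
  have iAC: "integrable M (\<lambda>\<omega>. indicator A (Y \<omega>) * indicator C (X \<omega>) :: real)"
    by (rule integrable_const_bound[of _ 1]) (auto simp: indicator_def)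
  have iA: "integrable M (\<lambda>\<omega>. indicator A (Y \<omega>) :: real)"
    by (rule integrable_const_bound[of _ 1]) (auto simp: indicator_def)
  have iC: "integrable M (\<lambda>\<omega>. indicator C (X \<omega>) :: real)"
    by (rule integrable_const_bound[of _ 1]) (auto simp: indicator_def)
  have ae: "AE \<omega> in M.
          real_cond_exp M ?F (\<lambda>\<omega>. indicator A (Y \<omega>) * indicator C (X \<omega>)) \<omega>
          = real_cond_exp M ?F (\<lambda>\<omega>. indicator A (Y \<omega>)) \<omega>
            * real_cond_exp M ?F (\<lambda>\<omega>. indicator C (X \<omega>)) \<omega>"
    using ci A C unfolding cond_indep_def by blast
  have "(\<integral>\<omega>. indicator A (Y \<omega>) * indicator C (X \<omega>) \<partial>M)
      = (\<integral>\<omega>. real_cond_exp M ?F (\<lambda>\<omega>. indicator A (Y \<omega>) * indicator C (X \<omega>)) \<omega> \<partial>M)"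
    using F.real_cond_exp_int(2)[OF iAC] by simp
  also have "\<dots> = (\<integral>\<omega>. real_cond_exp M ?F (\<lambda>\<omega>. indicator A (Y \<omega>)) \<omega>
            * real_cond_exp M ?F (\<lambda>\<omega>. indicator C (X \<omega>)) \<omega> \<partial>M)"
    by (rule integral_cong_AE) (use ae in auto)
  also have "\<dots> = (\<integral>\<omega>. real_cond_exp M ?F (\<lambda>\<omega>. indicator A (Y \<omega>)) \<omega> * indicator C (X \<omega>) \<partial>M)"
  proof (rule F.real_cond_exp_intg(2))
    show "integrable M (\<lambda>\<omega>. real_cond_exp M ?F (\<lambda>\<omega>. indicator A (Y \<omega>)) \<omega> * indicator C (X \<omega>))"
      by (rule Bochner_Integration.integrable_bound[OF F.real_cond_exp_int(1)[OF iA]]) (auto simp: indicator_def)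
  qed auto
  finally show ?thesis .
qed

lemma reg_to_CI:
  fixes X :: "'a \<Rightarrow> 'c::topological_space" and Y :: "'a \<Rightarrow> 'b::topological_space" and v :: "'c \<Rightarrow> 'd::topological_space"
  assumes M: "prob_space M" and [measurable]: "X \<in> borel_measurable M" "Y \<in> borel_measurable M"
    and v[measurable]: "v \<in> borel_measurable borel"
    and hyp: "\<forall>A\<in>sets borel. \<exists>m::'a \<Rightarrow> real. m \<in> borel_measurable (gen_alg M (\<lambda>\<omega>. v (X \<omega>))) \<and> (\<forall>\<omega>. 0 \<le> m \<omega> \<and> m \<omega> \<le> 1) \<and>
          (\<forall>C\<in>sets borel. (\<integral>\<omega>. indicator A (Y \<omega>) * indicator C (X \<omega>) \<partial>M) = (\<integral>\<omega>. m \<omega> * indicator C (X \<omega>) \<partial>M))"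
  shows "cond_indep M Y X (\<lambda>\<omega>. v (X \<omega>))"
  unfolding cond_indep_def
proof (intro ballI)
  interpret prob_space M by fact
  let ?V = "\<lambda>\<omega>. v (X \<omega>)"
  let ?F = "gen_alg M ?V"
  interpret F: sigma_finite_subalgebra M ?F by (rule gen_alg_sfs[OF M]) simp
  fix A :: "'b set" and B :: "'c set" assume A[measurable]: "A \<in> sets borel" and B[measurable]: "B \<in> sets borel"
  obtain m :: "'a \<Rightarrow> real" where mF[measurable]: "m \<in> borel_measurable ?F" and m01: "\<And>\<omega>. 0 \<le> m \<omega> \<and> m \<omega> \<le> 1"
    and mC: "\<And>C. C \<in> sets borel \<Longrightarrow> (\<integral>\<omega>. indicator A (Y \<omega>) * indicator C (X \<omega>) \<partial>M) = (\<integral>\<omega>. m \<omega> * indicator C (X \<omega>) \<partial>M)"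
    using hyp A by blast
  have mM[measurable]: "m \<in> borel_measurable M" by (rule measurable_from_subalg[OF F.subalg mF])
  have im: "integrable M m" by (rule integrable_const_bound[of _ 1]) (use m01 in auto)
  have iA: "integrable M (\<lambda>\<omega>. indicator A (Y \<omega>) :: real)"
    by (rule integrable_const_bound[of _ 1]) (auto simp: indicator_def)
  have iB: "integrable M (\<lambda>\<omega>. indicator B (X \<omega>) :: real)"
    by (rule integrable_const_bound[of _ 1]) (auto simp: indicator_def)
  have iAB: "integrable M (\<lambda>\<omega>. indicator A (Y \<omega>) * indicator B (X \<omega>) :: real)"
    by (rule integrable_const_bound[of _ 1]) (auto simp: indicator_def)
  have GF: "\<exists>E\<in>sets borel. \<forall>\<omega>\<in>space M. indicator G \<omega> = (indicator E (X \<omega>) :: real)" if "G \<in> sets ?F" for G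
  proof -
    have "G \<in> {?V -` A \<inter> space M | A. A \<in> sets borel}" using that by (simp only: gen_alg_sets)
    then have "\<exists>E. G = ?V -` E \<inter> space M \<and> E \<in> sets borel" by (simp only: mem_Collect_eq)
    then obtain E where E: "E \<in> sets borel" "G = ?V -` E \<inter> space M" by blast
    have "v -` E \<in> sets borel" using measurable_sets[OF v E(1)] by simp
    moreover have "\<forall>\<omega>\<in>space M. indicator G \<omega> = (indicator (v -` E) (X \<omega>) :: real)"
      unfolding E(2) by (simp add: indicator_def)
    ultimately show ?thesis by blast
  qed
  have 1: "AE \<omega> in M. real_cond_exp M ?F (\<lambda>\<omega>. indicator A (Y \<omega>)) \<omega> = m \<omega>"
  proof (rule F.real_cond_exp_charact)
    fix G assume "G \<in> sets ?F"
    then obtain E where E: "E \<in> sets borel" "\<And>\<omega>. \<omega> \<in> space M \<Longrightarrow> indicator G \<omega> = (indicator E (X \<omega>) :: real)" using GF by blast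
    have "(\<integral>\<omega>\<in>G. indicator A (Y \<omega>) \<partial>M) = (\<integral>\<omega>. indicator A (Y \<omega>) * indicator E (X \<omega>) \<partial>M :: real)"
      unfolding set_lebesgue_integral_def by (rule Bochner_Integration.integral_cong) (simp_all add: E(2) mult.commute)
    also have "\<dots> = (\<integral>\<omega>. m \<omega> * indicator E (X \<omega>) \<partial>M)" by (rule mC[OF E(1)])
    also have "\<dots> = (\<integral>\<omega>\<in>G. m \<omega> \<partial>M)"
      unfolding set_lebesgue_integral_def by (rule Bochner_Integration.integral_cong) (simp_all add: E(2) mult.commute)
    finally show "(\<integral>\<omega>\<in>G. indicator A (Y \<omega>) \<partial>M) = (\<integral>\<omega>\<in>G. m \<omega> \<partial>M)" .
  next
    show "integrable M (\<lambda>\<omega>. indicator A (Y \<omega>) :: real)" by (rule iA)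
  next
    show "integrable M m" by (rule im)
  next
    show "m \<in> borel_measurable ?F" by (rule mF)
  qed
  have 2: "AE \<omega> in M. real_cond_exp M ?F (\<lambda>\<omega>. indicator A (Y \<omega>) * indicator B (X \<omega>)) \<omega>
             = m \<omega> * real_cond_exp M ?F (\<lambda>\<omega>. indicator B (X \<omega>)) \<omega>"
  proof (rule F.real_cond_exp_charact)
    fix G assume G: "G \<in> sets ?F"
    then obtain E where E: "E \<in> sets borel" "\<And>\<omega>. \<omega> \<in> space M \<Longrightarrow> indicator G \<omega> = (indicator E (X \<omega>) :: real)" using GF by blast
    have GM: "G \<in> sets M" using G F.subalg by (auto simp: subalgebra_def)
    have "(\<integral>\<omega>\<in>G. indicator A (Y \<omega>) * indicator B (X \<omega>) \<partial>M) = (\<integral>\<omega>. indicator A (Y \<omega>) * indicator (E \<inter> B) (X \<omega>) \<partial>M :: real)"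
      unfolding set_lebesgue_integral_def by (rule Bochner_Integration.integral_cong) (simp_all add: E(2) mult.commute mult.left_commute indicator_inter_arith)
    also have "\<dots> = (\<integral>\<omega>. m \<omega> * indicator (E \<inter> B) (X \<omega>) \<partial>M)" by (rule mC) (use E(1) in auto)
    also have "\<dots> = (\<integral>\<omega>. (indicator G \<omega> * m \<omega>) * indicator B (X \<omega>) \<partial>M)"
      by (rule Bochner_Integration.integral_cong) (simp_all add: E(2) mult.commute mult.left_commute indicator_inter_arith)
    also have "\<dots> = (\<integral>\<omega>. (indicator G \<omega> * m \<omega>) * real_cond_exp M ?F (\<lambda>\<omega>. indicator B (X \<omega>)) \<omega> \<partial>M)"
    proof (rule F.real_cond_exp_intg(2)[symmetric])
      show "integrable M (\<lambda>\<omega>. (indicator G \<omega> * m \<omega>) * indicator B (X \<omega>))"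
      proof (rule Bochner_Integration.integrable_bound[OF im])
        show "(\<lambda>\<omega>. (indicator G \<omega> * m \<omega>) * indicator B (X \<omega>)) \<in> borel_measurable M"
          using GM by measurable
        show "AE \<omega> in M. norm ((indicator G \<omega> * m \<omega>) * indicator B (X \<omega>)) \<le> norm (m \<omega>)"
          using m01 by (intro AE_I2) (simp split: split_indicator)
      qed
      show "(\<lambda>\<omega>. indicator G \<omega> * m \<omega>) \<in> borel_measurable ?F" using G by measurable
      show "(\<lambda>\<omega>. indicator B (X \<omega>) :: real) \<in> borel_measurable M" by measurable
    qed
    also have "\<dots> = (\<integral>\<omega>\<in>G. m \<omega> * real_cond_exp M ?F (\<lambda>\<omega>. indicator B (X \<omega>)) \<omega> \<partial>M)"
      unfolding set_lebesgue_integral_def by (simp add: ac_simps)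
    finally show "(\<integral>\<omega>\<in>G. indicator A (Y \<omega>) * indicator B (X \<omega>) \<partial>M) =
      (\<integral>\<omega>\<in>G. m \<omega> * real_cond_exp M ?F (\<lambda>\<omega>. indicator B (X \<omega>)) \<omega> \<partial>M)" .
  next
    show "integrable M (\<lambda>\<omega>. m \<omega> * real_cond_exp M ?F (\<lambda>\<omega>. indicator B (X \<omega>)) \<omega>)"
    proof (rule Bochner_Integration.integrable_bound[OF F.real_cond_exp_int(1)[OF iB]])
      show "(\<lambda>\<omega>. m \<omega> * real_cond_exp M ?F (\<lambda>\<omega>. indicator B (X \<omega>)) \<omega>) \<in> borel_measurable M"
        by measurable
      have "\<And>\<omega>. \<bar>m \<omega> * real_cond_exp M ?F (\<lambda>\<omega>. indicator B (X \<omega>)) \<omega>\<bar> \<le> \<bar>real_cond_exp M ?F (\<lambda>\<omega>. indicator B (X \<omega>)) \<omega>\<bar>"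
        using m01 by (simp add: abs_mult mult_left_le_one_le)
      then show "AE \<omega> in M. norm (m \<omega> * real_cond_exp M ?F (\<lambda>\<omega>. indicator B (X \<omega>)) \<omega>) \<le> norm (real_cond_exp M ?F (\<lambda>\<omega>. indicator B (X \<omega>)) \<omega>)"
        by simp
    qed
  next
    show "integrable M (\<lambda>\<omega>. indicator A (Y \<omega>) * indicator B (X \<omega>) :: real)" by (rule iAB)
  next
    show "(\<lambda>\<omega>. m \<omega> * real_cond_exp M ?F (\<lambda>\<omega>. indicator B (X \<omega>)) \<omega>) \<in> borel_measurable ?F"
      by measurable
  qed
  show "AE \<omega> in M.
          real_cond_exp M ?F (\<lambda>\<omega>. indicator A (Y \<omega>) * indicator B (X \<omega>)) \<omega>
          = real_cond_exp M ?F (\<lambda>\<omega>. indicator A (Y \<omega>)) \<omega>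
            * real_cond_exp M ?F (\<lambda>\<omega>. indicator B (X \<omega>)) \<omega>"
    using 1 2 by eventually_elim simp
qed



definition trunc :: "nat \<Rightarrow> (nat \<Rightarrow> real) \<Rightarrow> nat \<Rightarrow> real" where
  "trunc d r = (\<lambda>i. if i < d then r i else 0)"

lemma trunc_cont: "continuous_on UNIV (trunc d)"
  unfolding trunc_def
proof (intro continuous_on_coordinatewise_then_product)
  fix i show "continuous_on UNIV (\<lambda>x::nat \<Rightarrow> real. if i < d then x i else 0)"
    by (cases "i < d") (auto intro!: continuous_intros continuous_on_product_then_coordinatewise)
qed

lemma dens_trunc:
  assumes g: "g \<in> dens_class Yset"
  shows "(\<lambda>r. g (trunc d r)) \<in> dens_class_d Yset d"
proof -
  have gm: "(\<lambda>(r, y). g r y) \<in> borel_measurable (borel :: ((nat \<Rightarrow> real) \<times> real) measure)"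
    using g by (simp add: dens_class_def)
  have tm[measurable]: "trunc d \<in> borel_measurable borel" by (rule borel_measurable_continuous_onI[OF trunc_cont])
  have sm[measurable]: "snd \<in> borel_measurable (borel :: ((nat \<Rightarrow> real) \<times> real) measure)"
    by (intro borel_measurable_continuous_onI continuous_on_snd continuous_on_id)
  have fm[measurable]: "fst \<in> borel_measurable (borel :: ((nat \<Rightarrow> real) \<times> real) measure)"
    by (intro borel_measurable_continuous_onI continuous_on_fst continuous_on_id)
  have "(\<lambda>x. (trunc d (fst x), snd x)) \<in> measurable (borel :: ((nat \<Rightarrow> real) \<times> real) measure) (borel :: ((nat \<Rightarrow> real) \<times> real) measure)"
    by measurable
  from measurable_compose[OF this gm]
  have "(\<lambda>(r, y). g (trunc d r) y) \<in> borel_measurable (borel :: ((nat \<Rightarrow> real) \<times> real) measure)"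
    by (simp add: split_beta')
  moreover have tr: "\<forall>r r'. (\<forall>i<d. r i = r' i) \<longrightarrow> g (trunc d r) = g (trunc d r')"
  proof (intro allI impI)
    fix r r' :: "nat \<Rightarrow> real" assume "\<forall>i<d. r i = r' i"
    then have "trunc d r = trunc d r'" by (auto simp: trunc_def)
    then show "g (trunc d r) = g (trunc d r')" by simp
  qed
  ultimately have "(\<lambda>r. g (trunc d r)) \<in> dens_class Yset" using g by (simp add: dens_class_def)
  then show ?thesis unfolding dens_class_d_def using tr by blast
qed

lemma dens_class_d_mono: "d \<le> d' \<Longrightarrow> dens_class_d Yset d \<subseteq> dens_class_d Yset d'"
  by (auto simp: dens_class_d_def)

lemma psi_meas:
  assumes g: "g \<in> dens_class Yset" and A: "A \<in> sets borel" and Ys: "Yset \<in> sets borel"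
  shows "(\<lambda>r. enn2real (\<integral>\<^sup>+y. ennreal (g r y) * indicator (A \<inter> Yset) y \<partial>lborel)) \<in> borel_measurable borel"
proof -
  have gm: "(\<lambda>(r, y). g r y) \<in> borel_measurable (borel \<Otimes>\<^sub>M lborel)"
  proof -
    have "(\<lambda>(r, y). g r y) \<in> borel_measurable (borel :: ((nat \<Rightarrow> real) \<times> real) measure)"
      using g by (simp add: dens_class_def)
    then show ?thesis
      by (subst measurable_cong_sets[where M'="borel \<Otimes>\<^sub>M borel" and N'=borel]) (simp_all add: borel_prod)
  qed
  have "(\<lambda>r. \<integral>\<^sup>+y. ennreal (g r y) * indicator (A \<inter> Yset) y \<partial>lborel) \<in> borel_measurable borel"
    using gm A Ys by measurable
  then show ?thesis by measurable
qed

lemma cd_rect: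
  fixes Z :: "'a \<Rightarrow> (nat \<Rightarrow> real)" and Y :: "'a \<Rightarrow> real"
  assumes M: "prob_space M" and Zm[measurable]: "Z \<in> borel_measurable M" and Ym[measurable]: "Y \<in> borel_measurable M"
    and Ys[measurable]: "Yset \<in> sets borel"
    and cd: "is_cond_density M Yset Y Z p" and A[measurable]: "A \<in> sets borel" and C[measurable]: "C \<in> sets borel"
  shows "(\<integral>\<omega>. indicator C (Z \<omega>) * indicator A (Y \<omega>) \<partial>M)
       = (\<integral>\<omega>. indicator C (Z \<omega>) * enn2real (\<integral>\<^sup>+y. ennreal (p (Z \<omega>) y) * indicator (A \<inter> Yset) y \<partial>lborel) \<partial>M)"
proof -
  interpret prob_space M by fact
  have pd: "p \<in> dens_class Yset" using cd by (simp add: is_cond_density_def)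
  let ?I = "\<lambda>r. \<integral>\<^sup>+y. ennreal (p r y) * indicator (A \<inter> Yset) y \<partial>lborel"
  have Im[measurable]: "(\<lambda>r. enn2real (?I r)) \<in> borel_measurable borel" by (rule psi_meas[OF pd A Ys])
  have I1: "?I r \<le> 1" for r
  proof -
    have "?I r \<le> (\<integral>\<^sup>+y. ennreal (p r y) * indicator Yset y \<partial>lborel)"
      by (intro nn_integral_mono) (auto simp: indicator_def)
    also have "\<dots> = 1" using pd by (simp add: dens_class_def)
    finally show ?thesis .
  qed
  have eI: "ennreal (enn2real (?I r)) = ?I r" for r
    using I1[of r] by (intro ennreal_enn2real) (auto simp: less_top[symmetric] top_unique)
  have S: "{\<omega> \<in> space M. Y \<omega> \<in> A \<and> Z \<omega> \<in> C} \<in> sets M" by measurable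
  have "(\<integral>\<omega>. indicator C (Z \<omega>) * indicator A (Y \<omega>) \<partial>M) = (\<integral>\<omega>. indicator {\<omega> \<in> space M. Y \<omega> \<in> A \<and> Z \<omega> \<in> C} \<omega> \<partial>M :: real)"
    by (rule Bochner_Integration.integral_cong) (auto simp: indicator_def)
  also have "\<dots> = measure M {\<omega> \<in> space M. Y \<omega> \<in> A \<and> Z \<omega> \<in> C}"
    using S by simp
  also have "\<dots> = enn2real (emeasure M {\<omega> \<in> space M. Y \<omega> \<in> A \<and> Z \<omega> \<in> C})"
    by (simp add: measure_def)
  also have "emeasure M {\<omega> \<in> space M. Y \<omega> \<in> A \<and> Z \<omega> \<in> C} = (\<integral>\<^sup>+\<omega>. indicator C (Z \<omega>) * ?I (Z \<omega>) \<partial>M)"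
    using cd A C by (simp add: is_cond_density_def)
  also have "\<dots> = (\<integral>\<^sup>+\<omega>. ennreal (indicator C (Z \<omega>) * enn2real (?I (Z \<omega>))) \<partial>M)"
  proof (intro nn_integral_cong)
    fix \<omega> show "indicator C (Z \<omega>) * ?I (Z \<omega>) = ennreal (indicator C (Z \<omega>) * enn2real (?I (Z \<omega>)))"
      using eI[of "Z \<omega>"] by (cases "Z \<omega> \<in> C") (simp_all del: ennreal_enn2real_if)
  qed
  also have "enn2real \<dots> = (\<integral>\<omega>. indicator C (Z \<omega>) * enn2real (?I (Z \<omega>)) \<partial>M)"
    by (rule integral_eq_nn_integral[symmetric]) auto
  finally show ?thesis .
qed



lemma dens_eq_ae:
  fixes Z :: "'a \<Rightarrow> (nat \<Rightarrow> real)" and Y :: "'a \<Rightarrow> real"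
  assumes M: "prob_space M" and Zm[measurable]: "Z \<in> borel_measurable M" and Ym[measurable]: "Y \<in> borel_measurable M"
    and Ys[measurable]: "Yset \<in> sets borel"
    and cd: "is_cond_density M Yset Y Z p" and Qd: "Q \<in> dens_class Yset"
    and eq: "AE \<omega> in M. Q (Z \<omega>) (Y \<omega>) = p (Z \<omega>) (Y \<omega>)"
  shows "AE \<omega> in M. AE y in lborel. ennreal (p (Z \<omega>) y) * indicator Yset y = ennreal (Q (Z \<omega>) y) * indicator Yset y"
proof -
  interpret prob_space M by fact
  have pd: "p \<in> dens_class Yset" using cd by (simp add: is_cond_density_def)
  have pm[measurable]: "(\<lambda>x. p (fst x) (snd x)) \<in> borel_measurable (borel :: ((nat \<Rightarrow> real) \<times> real) measure)"
    using dens_meas[OF pd] by (simp add: split_beta')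
  have Qm[measurable]: "(\<lambda>x. Q (fst x) (snd x)) \<in> borel_measurable (borel :: ((nat \<Rightarrow> real) \<times> real) measure)"
    using dens_meas[OF Qd] by (simp add: split_beta')
  have sm[measurable]: "snd \<in> borel_measurable (borel :: ((nat \<Rightarrow> real) \<times> real) measure)"
    by (intro borel_measurable_continuous_onI continuous_on_snd continuous_on_id)
  have p0: "\<And>r y. 0 \<le> p r y" using pd by (simp add: dens_class_def)
  have Q0: "\<And>r y. 0 \<le> Q r y" using Qd by (simp add: dens_class_def)
  have Q1: "\<And>r. (\<integral>\<^sup>+ y. ennreal (Q r y) * indicator Yset y \<partial>lborel) = 1" using Qd by (simp add: dens_class_def)
  have ppos: "AE \<omega> in M. 0 < p (Z \<omega>) (Y \<omega>)" by (rule cd_pos[OF M Zm Ym Ys cd])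
  have ZQm: "(\<lambda>x. (Z (fst x), snd x)) \<in> measurable (M \<Otimes>\<^sub>M lborel) (borel :: ((nat \<Rightarrow> real) \<times> real) measure)"
    by measurable
  have PM: "(\<lambda>\<omega>. \<integral>\<^sup>+y. F (Z \<omega>, y) \<partial>lborel) \<in> borel_measurable M"
    if "F \<in> borel_measurable (borel :: ((nat \<Rightarrow> real) \<times> real) measure)" for F :: "_ \<Rightarrow> ennreal"
  proof -
    have "(\<lambda>x. F (Z (fst x), snd x)) \<in> borel_measurable (M \<Otimes>\<^sub>M lborel)"
      using measurable_compose[OF ZQm that] by simp
    then have "case_prod (\<lambda>\<omega> y. F (Z \<omega>, y)) \<in> borel_measurable (M \<Otimes>\<^sub>M lborel)"
      by (simp add: split_beta')
    then show ?thesis by (rule lborel.borel_measurable_nn_integral)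
  qed
  have SM: "(\<lambda>y. F (Z \<omega>, y)) \<in> borel_measurable lborel"
    if "F \<in> borel_measurable (borel :: ((nat \<Rightarrow> real) \<times> real) measure)" for F :: "_ \<Rightarrow> ennreal" and \<omega>
  proof -
    have "(\<lambda>y::real. (Z \<omega>, y)) \<in> measurable lborel (borel :: ((nat \<Rightarrow> real) \<times> real) measure)" by measurable
    from measurable_compose[OF this that] show ?thesis by simp
  qed
  define H1 where "H1 = (\<lambda>x::(nat \<Rightarrow> real) \<times> real. ennreal (Q (fst x) (snd x)) * indicator Yset (snd x) * (if 0 < p (fst x) (snd x) then 1 else 0))"
  define H0 where "H0 = (\<lambda>x::(nat \<Rightarrow> real) \<times> real. ennreal (Q (fst x) (snd x)) * indicator Yset (snd x) * (if 0 < p (fst x) (snd x) then 0 else 1))"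
  define F1 where "F1 = (\<lambda>x::(nat \<Rightarrow> real) \<times> real. ennreal (Q (fst x) (snd x) / p (fst x) (snd x)))"
  define F2 where "F2 = (\<lambda>x::(nat \<Rightarrow> real) \<times> real. ennreal \<bar>1 - Q (fst x) (snd x) / p (fst x) (snd x)\<bar>)"
  have H1m[measurable]: "H1 \<in> borel_measurable borel" unfolding H1_def by measurable
  have H0m[measurable]: "H0 \<in> borel_measurable borel" unfolding H0_def by measurable
  have F1m[measurable]: "F1 \<in> borel_measurable borel" unfolding F1_def by measurable
  have F2m[measurable]: "F2 \<in> borel_measurable borel" unfolding F2_def by measurable
  have F2pm: "(\<lambda>x. F2 x * (ennreal (p (fst x) (snd x)) * indicator Yset (snd x))) \<in> borel_measurable borel" by measurable
  have F1H1: "F1 x * (ennreal (p (fst x) (snd x)) * indicator Yset (snd x)) = H1 x" for x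
  proof -
    have "F1 x * ennreal (p (fst x) (snd x)) = ennreal (Q (fst x) (snd x) / p (fst x) (snd x) * p (fst x) (snd x))"
      unfolding F1_def by (subst ennreal_mult[symmetric]) (use p0 Q0 in auto)
    also have "\<dots> = ennreal (Q (fst x) (snd x)) * (if 0 < p (fst x) (snd x) then 1 else 0)"
      using p0[of "fst x" "snd x"] by auto
    finally have c: "F1 x * ennreal (p (fst x) (snd x)) = ennreal (Q (fst x) (snd x)) * (if 0 < p (fst x) (snd x) then 1 else 0)" .
    have "F1 x * (ennreal (p (fst x) (snd x)) * indicator Yset (snd x)) = (F1 x * ennreal (p (fst x) (snd x))) * indicator Yset (snd x)"
      by (rule mult.assoc[symmetric])
    also have "\<dots> = ennreal (Q (fst x) (snd x)) * (if 0 < p (fst x) (snd x) then 1 else 0) * indicator Yset (snd x)"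
      by (simp only: c)
    also have "\<dots> = H1 x" unfolding H1_def by (simp only: mult.assoc mult.commute[of "(if 0 < p (fst x) (snd x) then 1 else 0)" "indicator Yset (snd x)"])
    finally show ?thesis .
  qed
  have F1H1': "F1 (r, y) * (ennreal (p r y) * indicator Yset y) = H1 (r, y)" for r y
    using F1H1[of "(r, y)"] by simp
  have H10: "H1 x + H0 x = ennreal (Q (fst x) (snd x)) * indicator Yset (snd x)" for x
    unfolding H1_def H0_def by auto
  have "(\<integral>\<^sup>+\<omega>. F1 (Z \<omega>, Y \<omega>) \<partial>M) = (\<integral>\<^sup>+\<omega>. 1 \<partial>M)"
  proof (rule nn_integral_cong_AE)
    show "AE \<omega> in M. F1 (Z \<omega>, Y \<omega>) = 1" using eq ppos by eventually_elim (simp add: F1_def)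
  qed
  then have iF1: "(\<integral>\<^sup>+\<omega>. F1 (Z \<omega>, Y \<omega>) \<partial>M) = 1" by (simp add: emeasure_space_1)
  have "(\<integral>\<^sup>+\<omega>. F1 (Z \<omega>, Y \<omega>) \<partial>M) = (\<integral>\<^sup>+\<omega>. \<integral>\<^sup>+y. F1 (Z \<omega>, y) * (ennreal (p (Z \<omega>) y) * indicator Yset y) \<partial>lborel \<partial>M)"
    by (rule cd_E1[OF M Zm Ym Ys cd F1m])
  also have "\<dots> = (\<integral>\<^sup>+\<omega>. \<integral>\<^sup>+y. H1 (Z \<omega>, y) \<partial>lborel \<partial>M)"
    by (simp only: F1H1')
  finally have iH1: "(\<integral>\<^sup>+\<omega>. \<integral>\<^sup>+y. H1 (Z \<omega>, y) \<partial>lborel \<partial>M) = 1" using iF1 by simp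
  have "1 = (\<integral>\<^sup>+\<omega>. \<integral>\<^sup>+y. ennreal (Q (Z \<omega>) y) * indicator Yset y \<partial>lborel \<partial>M)"
    using Q1 by (simp add: emeasure_space_1)
  also have "\<dots> = (\<integral>\<^sup>+\<omega>. (\<integral>\<^sup>+y. H1 (Z \<omega>, y) \<partial>lborel) + (\<integral>\<^sup>+y. H0 (Z \<omega>, y) \<partial>lborel) \<partial>M)"
  proof (intro nn_integral_cong)
    fix \<omega>
    have "(\<integral>\<^sup>+y. ennreal (Q (Z \<omega>) y) * indicator Yset y \<partial>lborel) = (\<integral>\<^sup>+y. H1 (Z \<omega>, y) + H0 (Z \<omega>, y) \<partial>lborel)"
      using H10 by simp
    also have "\<dots> = (\<integral>\<^sup>+y. H1 (Z \<omega>, y) \<partial>lborel) + (\<integral>\<^sup>+y. H0 (Z \<omega>, y) \<partial>lborel)"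
      by (rule nn_integral_add) (simp_all add: SM)
    finally show "(\<integral>\<^sup>+y. ennreal (Q (Z \<omega>) y) * indicator Yset y \<partial>lborel) = (\<integral>\<^sup>+y. H1 (Z \<omega>, y) \<partial>lborel) + (\<integral>\<^sup>+y. H0 (Z \<omega>, y) \<partial>lborel)" .
  qed
  also have "\<dots> = (\<integral>\<^sup>+\<omega>. \<integral>\<^sup>+y. H1 (Z \<omega>, y) \<partial>lborel \<partial>M) + (\<integral>\<^sup>+\<omega>. \<integral>\<^sup>+y. H0 (Z \<omega>, y) \<partial>lborel \<partial>M)"
    by (rule nn_integral_add) (simp_all add: PM)
  finally have "1 + 0 = 1 + (\<integral>\<^sup>+\<omega>. \<integral>\<^sup>+y. H0 (Z \<omega>, y) \<partial>lborel \<partial>M)" using iH1 by simp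
  then have iH0: "(\<integral>\<^sup>+\<omega>. \<integral>\<^sup>+y. H0 (Z \<omega>, y) \<partial>lborel \<partial>M) = 0"
    by (subst (asm) ennreal_add_left_cancel) simp
  have "(\<integral>\<^sup>+\<omega>. F2 (Z \<omega>, Y \<omega>) \<partial>M) = (\<integral>\<^sup>+\<omega>. 0 \<partial>M)"
  proof (rule nn_integral_cong_AE)
    show "AE \<omega> in M. F2 (Z \<omega>, Y \<omega>) = 0" using eq ppos by eventually_elim (simp add: F2_def)
  qed
  then have "0 = (\<integral>\<^sup>+\<omega>. F2 (Z \<omega>, Y \<omega>) \<partial>M)" by simp
  also have "\<dots> = (\<integral>\<^sup>+\<omega>. \<integral>\<^sup>+y. F2 (Z \<omega>, y) * (ennreal (p (Z \<omega>) y) * indicator Yset y) \<partial>lborel \<partial>M)"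
    by (rule cd_E1[OF M Zm Ym Ys cd F2m])
  finally have iF2: "(\<integral>\<^sup>+\<omega>. \<integral>\<^sup>+y. F2 (Z \<omega>, y) * (ennreal (p (Z \<omega>) y) * indicator Yset y) \<partial>lborel \<partial>M) = 0" by simp
  have ae0: "AE \<omega> in M. (\<integral>\<^sup>+y. H0 (Z \<omega>, y) \<partial>lborel) = 0"
    using iH0 by (subst (asm) nn_integral_0_iff_AE) (simp_all add: PM)
  have ae2: "AE \<omega> in M. (\<integral>\<^sup>+y. F2 (Z \<omega>, y) * (ennreal (p (Z \<omega>) y) * indicator Yset y) \<partial>lborel) = 0"
    using iF2 PM[OF F2pm] by (subst (asm) nn_integral_0_iff_AE) simp_all
  show ?thesis
    using ae0 ae2
  proof eventually_elim
    case (elim \<omega>)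
    have a0: "AE y in lborel. H0 (Z \<omega>, y) = 0"
      using elim(1) by (subst (asm) nn_integral_0_iff_AE) (simp_all add: SM)
    have a2: "AE y in lborel. F2 (Z \<omega>, y) * (ennreal (p (Z \<omega>) y) * indicator Yset y) = 0"
      using elim(2) SM[OF F2pm, of \<omega>] by (subst (asm) nn_integral_0_iff_AE) simp_all
    show ?case using a0 a2
    proof eventually_elim
      case (elim y)
      show ?case
      proof (cases "y \<in> Yset")
        case True
        show ?thesis
        proof (cases "0 < p (Z \<omega>) y")
          case True
          then have "\<bar>1 - Q (Z \<omega>) y / p (Z \<omega>) y\<bar> = 0"
            using elim(2) \<open>y \<in> Yset\<close> by (simp add: F2_def ennreal_eq_0_iff)
          then show ?thesis using True by (simp add: field_simps)
        next
          case False
          then have "p (Z \<omega>) y = 0" using p0[of "Z \<omega>" y] by simp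
          moreover have "Q (Z \<omega>) y = 0"
            using elim(1) False \<open>y \<in> Yset\<close> Q0[of "Z \<omega>" y] by (simp add: H0_def ennreal_eq_0_iff)
          ultimately show ?thesis by simp
        qed
      qed simp
    qed
  qed
qed



lemma psi_bnd:
  assumes g: "g \<in> dens_class Yset"
  shows "0 \<le> enn2real (\<integral>\<^sup>+y. ennreal (g r y) * indicator (A \<inter> Yset) y \<partial>lborel)
    \<and> enn2real (\<integral>\<^sup>+y. ennreal (g r y) * indicator (A \<inter> Yset) y \<partial>lborel) \<le> 1"
proof -
  have "(\<integral>\<^sup>+y. ennreal (g r y) * indicator (A \<inter> Yset) y \<partial>lborel) \<le> (\<integral>\<^sup>+y. ennreal (g r y) * indicator Yset y \<partial>lborel)"
    by (intro nn_integral_mono) (auto simp: indicator_def)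
  also have "\<dots> = 1" using g by (simp add: dens_class_def)
  finally have "(\<integral>\<^sup>+y. ennreal (g r y) * indicator (A \<inter> Yset) y \<partial>lborel) \<le> 1" .
  then have "enn2real (\<integral>\<^sup>+y. ennreal (g r y) * indicator (A \<inter> Yset) y \<partial>lborel) \<le> enn2real 1"
    by (intro enn2real_mono) auto
  then show ?thesis by simp
qed

theorem propositionB4:
  fixes M :: "'a measure" and X :: "'a \<Rightarrow> real^'p" and Y :: "'a \<Rightarrow> real"
    and Yset :: "real set" and dmax :: nat and B :: "nat \<Rightarrow> real^'p"
    and R :: "'a \<Rightarrow> nat \<Rightarrow> real"
  assumes "prob_space M"
    and "X \<in> borel_measurable M" and "Y \<in> borel_measurable M"
    and "Yset \<in> sets borel" and "\<forall>\<omega> \<in> space M. Y \<omega> \<in> Yset"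
    and dens_exist: "\<forall>h :: real^'p \<Rightarrow> (nat \<Rightarrow> real). h \<in> borel_measurable borel \<longrightarrow>
                      (\<exists>g. is_cond_density M Yset Y (\<lambda>\<omega>. h (X \<omega>)) g)"
    and nll_finite: "\<forall>(h :: real^'p \<Rightarrow> (nat \<Rightarrow> real)) g. h \<in> borel_measurable borel \<longrightarrow>
                      is_cond_density M Yset Y (\<lambda>\<omega>. h (X \<omega>)) g \<longrightarrow>
                      integrable M (\<lambda>\<omega>. - ln (g (h (X \<omega>)) (Y \<omega>)))"
    and CS_drs: "dim_red_subspace M X Y (central_subspace M X Y)"
    and basis: "inj_on B {..<dim (central_subspace M X Y)}"
               "independent (B ` {..<dim (central_subspace M X Y)})"
               "span (B ` {..<dim (central_subspace M X Y)}) = central_subspace M X Y"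
    and dmax: "dim (central_subspace M X Y) \<le> dmax"
    and R_def: "\<forall>\<omega> i. R \<omega> i = (if i < dim (central_subspace M X Y) then inner (B i) (X \<omega>) else 0)"
  shows "d_star M Yset Y R dmax = dim (central_subspace M X Y)"

proof -
  note Mp = assms(1)
  interpret prob_space M by fact
  have Xm[measurable]: "X \<in> borel_measurable M" using assms(2) .
  have Ym[measurable]: "Y \<in> borel_measurable M" using assms(3) .
  have Ys[measurable]: "Yset \<in> sets borel" using assms(4) .
  define CS where "CS = central_subspace M X Y"
  define dC where "dC = dim CS"
  have sCS: "subspace CS" using CS_drs by (simp add: CS_def dim_red_subspace_def)
  have bas1: "inj_on B {..<dC}" using basis(1) by (simp add: dC_def CS_def)
  have bas2: "independent (B ` {..<dC})" using basis(2) by (simp add: dC_def CS_def)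
  have bas3: "span (B ` {..<dC}) = CS" using basis(3) by (simp add: dC_def CS_def)
  have BCS: "B i \<in> CS" if "i < dC" for i
    using that bas3 by (metis lessThan_iff image_eqI span_base)
  have hR: "R \<omega> = hT B dC (X \<omega>)" for \<omega>
    using R_def by (auto simp: hT_def dC_def CS_def)
  have Rfun: "(\<lambda>\<omega>. hT B dC (X \<omega>)) = R" using hR by auto
  have hTm[measurable]: "hT B d \<in> borel_measurable borel" for d
    by (rule borel_measurable_continuous_onI[OF hT_cont])
  have Rm[measurable]: "R \<in> borel_measurable M"
    unfolding Rfun[symmetric] by measurable
  have trR: "trunc dC (R \<omega>) = R \<omega>" for \<omega>
    by (auto simp: trunc_def hR hT_def)
  have dmax': "dC \<le> dmax" using dmax by (simp add: dC_def CS_def)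
  have exR: "exp_nll M Y R (\<lambda>r. g (trunc dC r)) = exp_nll M Y R g" for g
    by (simp add: exp_nll_def trR)
  have L1: "loss_d M Yset Y R dmax = loss_d M Yset Y R dC"
  proof (rule antisym)
    show "loss_d M Yset Y R dmax \<le> loss_d M Yset Y R dC"
      unfolding loss_d_def by (rule INF_superset_mono[OF dens_class_d_mono[OF dmax']]) simp
    show "loss_d M Yset Y R dC \<le> loss_d M Yset Y R dmax"
      unfolding loss_d_def
    proof (rule INF_mono)
      fix g assume "g \<in> dens_class_d Yset dmax"
      then have "g \<in> dens_class Yset" by (simp add: dens_class_d_def)
      then have "(\<lambda>r. g (trunc dC r)) \<in> dens_class_d Yset dC" by (rule dens_trunc)
      then show "\<exists>g'\<in>dens_class_d Yset dC. exp_nll M Y R g' \<le> exp_nll M Y R g"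
        using exR by (intro bexI[of _ "\<lambda>r. g (trunc dC r)"]) auto
    qed
  qed
  have L2: "loss_d M Yset Y R d \<noteq> loss_d M Yset Y R dC" if dlt: "d < dC" for d
  proof
    assume eqL: "loss_d M Yset Y R d = loss_d M Yset Y R dC"
    define Zd where "Zd = (\<lambda>\<omega>. hT B d (X \<omega>))"
    have Zdm[measurable]: "Zd \<in> borel_measurable M" unfolding Zd_def by measurable
    have ZdR: "Zd \<omega> = trunc d (R \<omega>)" for \<omega>
      using dlt by (auto simp: Zd_def trunc_def hR hT_def)
    obtain p where p0: "is_cond_density M Yset Y (\<lambda>\<omega>. hT B dC (X \<omega>)) p"
      using dens_exist hTm[of dC] by blast
    have p: "is_cond_density M Yset Y R p" using p0 by (simp only: Rfun)
    obtain q where q0: "is_cond_density M Yset Y (\<lambda>\<omega>. hT B d (X \<omega>)) q"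
      using dens_exist hTm[of d] by blast
    have q: "is_cond_density M Yset Y Zd q" using q0 by (simp only: Zd_def)
    have "integrable M (\<lambda>\<omega>. - ln (p (hT B dC (X \<omega>)) (Y \<omega>)))"
      using nll_finite hTm[of dC] p0 by blast
    then have ip: "integrable M (\<lambda>\<omega>. - ln (p (R \<omega>) (Y \<omega>)))" by (simp only: hR[symmetric])
    have "integrable M (\<lambda>\<omega>. - ln (q (hT B d (X \<omega>)) (Y \<omega>)))"
      using nll_finite hTm[of d] q0 by blast
    then have iq: "integrable M (\<lambda>\<omega>. - ln (q (Zd \<omega>) (Y \<omega>)))" by (simp only: Zd_def)
    have pd: "p \<in> dens_class Yset" using p by (simp add: is_cond_density_def)
    have qd: "q \<in> dens_class Yset" using q by (simp add: is_cond_density_def)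
    define Lp where "Lp = (\<integral>\<omega>. - ln (p (R \<omega>) (Y \<omega>)) \<partial>M)"
    define Lq where "Lq = (\<integral>\<omega>. - ln (q (Zd \<omega>) (Y \<omega>)) \<partial>M)"
    have ppos: "AE \<omega> in M. 0 < p (R \<omega>) (Y \<omega>)" by (rule cd_pos[OF Mp Rm Ym Ys p])
    have qpos: "AE \<omega> in M. 0 < q (Zd \<omega>) (Y \<omega>)" by (rule cd_pos[OF Mp Zdm Ym Ys q])
    have a: "loss_d M Yset Y R dC \<le> ereal Lp"
      unfolding loss_d_def
    proof (rule INF_lower2[OF dens_trunc[OF pd, of dC]])
      show "exp_nll M Y R (\<lambda>r. p (trunc dC r)) \<le> ereal Lp"
        unfolding exR using ppos ip by (simp add: exp_nll_def Lp_def)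
    qed
    have b: "ereal Lq \<le> loss_d M Yset Y R d"
      unfolding loss_d_def
    proof (rule INF_greatest)
      fix g assume gd: "g \<in> dens_class_d Yset d"
      have gc: "g \<in> dens_class Yset" using gd by (simp add: dens_class_d_def)
      have gR: "g (R \<omega>) = g (Zd \<omega>)" for \<omega>
      proof -
        have "\<forall>i<d. R \<omega> i = Zd \<omega> i" using dlt by (auto simp: Zd_def hR hT_def)
        then show ?thesis using gd by (auto simp: dens_class_d_def)
      qed
      show "ereal Lq \<le> exp_nll M Y R g"
      proof (cases "(AE \<omega> in M. 0 < g (R \<omega>) (Y \<omega>)) \<and> integrable M (\<lambda>\<omega>. - ln (g (R \<omega>) (Y \<omega>)))")
        case True
        then have t1: "AE \<omega> in M. 0 < g (Zd \<omega>) (Y \<omega>)" and t2: "integrable M (\<lambda>\<omega>. - ln (g (Zd \<omega>) (Y \<omega>)))"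
          by (simp_all add: gR)
        have "Lq \<le> (\<integral>\<omega>. - ln (g (Zd \<omega>) (Y \<omega>)) \<partial>M)"
          unfolding Lq_def by (rule gibbs(1)[OF Mp Zdm Ym Ys q gc t2 iq t1])
        then show ?thesis using True by (simp add: exp_nll_def gR)
      next
        case False
        show ?thesis by (simp only: exp_nll_def if_not_P[OF False]) simp
      qed
    qed
    have c: "Lq \<le> Lp" using a b eqL by (metis ereal_less_eq(3) order_trans)
    define Q where "Q = (\<lambda>r. q (trunc d r))"
    have Qd: "Q \<in> dens_class Yset" using dens_trunc[OF qd, of d] by (simp add: Q_def dens_class_d_def)
    have QR: "Q (R \<omega>) = q (Zd \<omega>)" for \<omega> by (simp add: Q_def ZdR)
    have dd: "AE \<omega> in M. Q (R \<omega>) (Y \<omega>) = p (R \<omega>) (Y \<omega>)"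
    proof (rule gibbs(2)[OF Mp Rm Ym Ys p Qd])
      show "integrable M (\<lambda>\<omega>. - ln (Q (R \<omega>) (Y \<omega>)))" using iq by (simp add: QR)
      show "integrable M (\<lambda>\<omega>. - ln (p (R \<omega>) (Y \<omega>)))" by (rule ip)
      show "AE \<omega> in M. 0 < Q (R \<omega>) (Y \<omega>)" using qpos by (simp add: QR)
      show "(\<integral>\<omega>. - ln (Q (R \<omega>) (Y \<omega>)) \<partial>M) \<le> (\<integral>\<omega>. - ln (p (R \<omega>) (Y \<omega>)) \<partial>M)"
        using c by (simp add: QR Lp_def Lq_def)
    qed
    have ee: "AE \<omega> in M. AE y in lborel. ennreal (p (R \<omega>) y) * indicator Yset y = ennreal (Q (R \<omega>) y) * indicator Yset y"
      by (rule dens_eq_ae[OF Mp Rm Ym Ys p Qd dd])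
    define psi where "psi = (\<lambda>A r. enn2real (\<integral>\<^sup>+y. ennreal (p r y) * indicator (A \<inter> Yset) y \<partial>lborel))"
    define phi where "phi = (\<lambda>A r. enn2real (\<integral>\<^sup>+y. ennreal (q r y) * indicator (A \<inter> Yset) y \<partial>lborel))"
    have psiphi: "AE \<omega> in M. psi A (R \<omega>) = phi A (Zd \<omega>)" for A
      using ee
    proof eventually_elim
      case (elim \<omega>)
      have "(\<integral>\<^sup>+y. ennreal (p (R \<omega>) y) * indicator (A \<inter> Yset) y \<partial>lborel)
          = (\<integral>\<^sup>+y. ennreal (q (Zd \<omega>) y) * indicator (A \<inter> Yset) y \<partial>lborel)"
      proof (rule nn_integral_cong_AE)
        show "AE y in lborel. ennreal (p (R \<omega>) y) * indicator (A \<inter> Yset) y = ennreal (q (Zd \<omega>) y) * indicator (A \<inter> Yset) y"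
          using elim
        proof eventually_elim
          case (elim y)
          then show ?case by (cases "y \<in> A") (simp_all add: QR indicator_def split: if_splits)
        qed
      qed
      then show ?case by (simp add: psi_def phi_def)
    qed
    have psim[measurable]: "psi A \<in> borel_measurable borel" if "A \<in> sets borel" for A
      unfolding psi_def by (rule psi_meas[OF pd that Ys])
    have phim[measurable]: "phi A \<in> borel_measurable borel" if "A \<in> sets borel" for A
      unfolding phi_def by (rule psi_meas[OF qd that Ys])
    have psib: "0 \<le> psi A r \<and> psi A r \<le> 1" for A r unfolding psi_def by (rule psi_bnd[OF pd])
    have phib: "0 \<le> phi A r \<and> phi A r \<le> 1" for A r unfolding phi_def by (rule psi_bnd[OF qd])
    define V where "V = (\<lambda>\<omega>. oproj CS (X \<omega>))"
    have om[measurable]: "oproj CS \<in> borel_measurable borel"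
      by (rule borel_measurable_continuous_onI[OF oproj_cont[OF sCS]])
    have Vm[measurable]: "V \<in> borel_measurable M" unfolding V_def by measurable
    interpret F: sigma_finite_subalgebra M "gen_alg M V" by (rule gen_alg_sfs[OF Mp Vm])
    obtain K where Kc: "continuous_on UNIV K" and KR: "\<And>x. K (hT B dC x) = oproj CS x"
      using K_exists[OF bas1 bas2] unfolding bas3 by blast
    have Km[measurable]: "K \<in> borel_measurable borel" by (rule borel_measurable_continuous_onI[OF Kc])
    have hTV: "hT B dC (oproj CS x) = hT B dC x" for x
      by (auto simp: hT_def oproj_inner[OF sCS BCS])
    have CSchar: "AE \<omega> in M. real_cond_exp M (gen_alg M V) (\<lambda>\<omega>. indicator A (Y \<omega>)) \<omega> = psi A (R \<omega>)"
      if A[measurable]: "A \<in> sets borel" for A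
    proof (rule F.real_cond_exp_charact)
      fix G assume "G \<in> sets (gen_alg M V)"
      then have "G \<in> {V -` E \<inter> space M | E. E \<in> sets borel}" by (simp only: gen_alg_sets)
      then have "\<exists>E. G = V -` E \<inter> space M \<and> E \<in> sets borel" by (simp only: mem_Collect_eq)
      then obtain E where E: "E \<in> sets borel" "G = V -` E \<inter> space M" by blast
      have C[measurable]: "K -` E \<in> sets borel" using measurable_sets[OF Km E(1)] by simp
      have GI: "indicator G \<omega> = (indicator (K -` E) (R \<omega>) :: real)" if "\<omega> \<in> space M" for \<omega>
        using that by (simp add: E(2) V_def indicator_def hR KR)
      have "(\<integral>\<omega>\<in>G. indicator A (Y \<omega>) \<partial>M) = (\<integral>\<omega>. indicator (K -` E) (R \<omega>) * indicator A (Y \<omega>) \<partial>M :: real)"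
        unfolding set_lebesgue_integral_def by (rule Bochner_Integration.integral_cong) (simp_all add: GI)
      also have "\<dots> = (\<integral>\<omega>. indicator (K -` E) (R \<omega>) * psi A (R \<omega>) \<partial>M)"
        unfolding psi_def by (rule cd_rect[OF Mp Rm Ym Ys p A C])
      also have "\<dots> = (\<integral>\<omega>\<in>G. psi A (R \<omega>) \<partial>M)"
        unfolding set_lebesgue_integral_def by (rule Bochner_Integration.integral_cong) (simp_all add: GI)
      finally show "(\<integral>\<omega>\<in>G. indicator A (Y \<omega>) \<partial>M) = (\<integral>\<omega>\<in>G. psi A (R \<omega>) \<partial>M)" .
    next
      show "integrable M (\<lambda>\<omega>. indicator A (Y \<omega>) :: real)"
        by (rule integrable_const_bound[of _ 1]) (auto simp: indicator_def)
    next
      show "integrable M (\<lambda>\<omega>. psi A (R \<omega>))"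
        by (rule integrable_const_bound[of _ 1]) (use psib in auto)
    next
      have "(\<lambda>\<omega>. psi A (hT B dC (V \<omega>))) \<in> borel_measurable (gen_alg M V)"
        by (rule gen_alg_meas) measurable
      moreover have "(\<lambda>\<omega>. psi A (hT B dC (V \<omega>))) = (\<lambda>\<omega>. psi A (R \<omega>))"
        by (auto simp: V_def hTV hR)
      ultimately show "(\<lambda>\<omega>. psi A (R \<omega>)) \<in> borel_measurable (gen_alg M V)" by simp
    qed
    define Sd where "Sd = span (B ` {..<d})"
    have sSd: "subspace Sd" unfolding Sd_def by simp
    have BSd: "B i \<in> Sd" if "i < d" for i unfolding Sd_def using that by (intro span_base) auto
    have omd[measurable]: "oproj Sd \<in> borel_measurable borel"
      by (rule borel_measurable_continuous_onI[OF oproj_cont[OF sSd]])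
    have hTd: "hT B d (oproj Sd x) = hT B d x" for x
      by (auto simp: hT_def oproj_inner[OF sSd BSd])
    have "cond_indep M Y X (\<lambda>\<omega>. oproj Sd (X \<omega>))"
    proof (rule reg_to_CI[OF Mp Xm Ym omd], intro ballI)
      fix A :: "real set" assume A[measurable]: "A \<in> sets borel"
      show "\<exists>m::'a \<Rightarrow> real. m \<in> borel_measurable (gen_alg M (\<lambda>\<omega>. oproj Sd (X \<omega>))) \<and> (\<forall>\<omega>. 0 \<le> m \<omega> \<and> m \<omega> \<le> 1) \<and>
          (\<forall>C\<in>sets borel. (\<integral>\<omega>. indicator A (Y \<omega>) * indicator C (X \<omega>) \<partial>M) = (\<integral>\<omega>. m \<omega> * indicator C (X \<omega>) \<partial>M))"
      proof (intro exI[of _ "\<lambda>\<omega>. phi A (Zd \<omega>)"] conjI ballI allI)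
        have "(\<lambda>\<omega>. phi A (hT B d (oproj Sd (X \<omega>)))) \<in> borel_measurable (gen_alg M (\<lambda>\<omega>. oproj Sd (X \<omega>)))"
          by (rule gen_alg_meas) measurable
        then show "(\<lambda>\<omega>. phi A (Zd \<omega>)) \<in> borel_measurable (gen_alg M (\<lambda>\<omega>. oproj Sd (X \<omega>)))"
          by (simp add: hTd Zd_def)
        fix \<omega> show "0 \<le> phi A (Zd \<omega>)" "phi A (Zd \<omega>) \<le> 1" using phib by auto
      next
        fix C :: "(real^'p) set" assume C[measurable]: "C \<in> sets borel"
        have "(\<integral>\<omega>. indicator A (Y \<omega>) * indicator C (X \<omega>) \<partial>M)
            = (\<integral>\<omega>. real_cond_exp M (gen_alg M V) (\<lambda>\<omega>. indicator A (Y \<omega>)) \<omega> * indicator C (X \<omega>) \<partial>M)"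
        proof (rule CI_to_reg[OF Mp Xm Ym Vm _ A C])
          show "cond_indep M Y X V" using CS_drs by (simp add: dim_red_subspace_def V_def CS_def)
        qed
        also have "\<dots> = (\<integral>\<omega>. psi A (R \<omega>) * indicator C (X \<omega>) \<partial>M)"
        proof (rule integral_cong_AE)
          show "AE \<omega> in M. real_cond_exp M (gen_alg M V) (\<lambda>\<omega>. indicator A (Y \<omega>)) \<omega> * indicator C (X \<omega>) = psi A (R \<omega>) * indicator C (X \<omega>)"
            using CSchar[OF A] by eventually_elim simp
        qed measurable
        also have "\<dots> = (\<integral>\<omega>. phi A (Zd \<omega>) * indicator C (X \<omega>) \<partial>M)"
        proof (rule integral_cong_AE)
          show "AE \<omega> in M. psi A (R \<omega>) * indicator C (X \<omega>) = phi A (Zd \<omega>) * indicator C (X \<omega>)"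
            using psiphi[of A] by eventually_elim simp
        qed measurable
        finally show "(\<integral>\<omega>. indicator A (Y \<omega>) * indicator C (X \<omega>) \<partial>M) = (\<integral>\<omega>. phi A (Zd \<omega>) * indicator C (X \<omega>) \<partial>M)" .
      qed
    qed
    then have "dim_red_subspace M X Y Sd" using sSd by (simp add: dim_red_subspace_def)
    then have "CS \<subseteq> Sd" unfolding CS_def central_subspace_def by blast
    then have "dC \<le> dim Sd" unfolding dC_def by (rule dim_subset)
    also have "dim Sd \<le> card (B ` {..<d})" unfolding Sd_def dim_span
      by (rule dim_le_card) (auto intro: span_base)
    also have "\<dots> \<le> d" using card_image_le[of "{..<d}" B] by simp
    finally show False using dlt by simp
  qed
  have "d_star M Yset Y R dmax = dC"
    unfolding d_star_def
  proof (rule Least_equality)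
    show "dC \<le> dmax \<and> loss_d M Yset Y R dC = loss_d M Yset Y R dmax" using dmax' L1 by simp
    fix d assume "d \<le> dmax \<and> loss_d M Yset Y R d = loss_d M Yset Y R dmax"
    then show "dC \<le> d" using L1 L2 by (metis not_le)
  qed
  then show ?thesis by (simp add: dC_def CS_def)
qed


end
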